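(* Let $W$ be a non-trivial cyclically reduced word over $Y_C\cup Y_C^{-1}$ which represents the identity in the group $Q_C=\langle Y_C\mid \mathcal{S}_C\rangle$. Then some non-trivial subword of some cyclic permutation of $W$ is a cyclic permutation of (a reduced word representing) an element of the normal closure $\langle\langle \mathcal{S}_C\rangle\rangle^F$ of $\mathcal{S}_C$ in $F$. In particular, $\|W\|\ge C$.
   Context: Let $Q$ be a finitely generated recursively presented group with presentation $\langle Y\mid\mathcal{S}\rangle$, where $Y=\{y_1,\dots,y_m\}$ is finite, $\mathcal{S}$ is a recursive set of positive words over $Y$ (words using only letters of $Y$, not $Y^{-1}$), and the empty word is not in $\mathcal{S}$. Let $C\ge1$ be an integer. For $i=1,\dots,m$ let $Y_{C,i}=\{a_{1,i},\dots,a_{C,i}\}$, $Y_C=\bigcup_iY_{C,i}$ (all letters distinct), $A_i=a_{1,i}\cdots a_{C,i}$, $\mathcal{D}=\{A_1,\dots,A_m\}$, and $F=\langle\mathcal{D}\rangle\le F(Y_C)$ (free with basis $\mathcal{D}$). For $r=r(y_1,\dots,y_m)\in\mathcal{S}$ let $r_C=r(A_1,\dots,A_m)$ and $\mathcal{S}_C=\{r_C:r\in\mathcal{S}\}$. $\|W\|$ is the number of letters of $W$. *)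

theory Defs
  imports Main
begin

text \<open>Words over a generating set and its inverses: a letter is a pair (x, e) where
  e = False means the generator x and e = True means its inverse.\<close>

type_synonym 'g word = "('g \<times> bool) list"

definition inv_letter :: "'g \<times> bool \<Rightarrow> 'g \<times> bool" where
  "inv_letter a = (fst a, \<not> snd a)"

definition inv_word :: "'g word \<Rightarrow> 'g word" where
  "inv_word w = rev (map inv_letter w)"

definition reduced :: "'g word \<Rightarrow> bool" where
  "reduced w \<longleftrightarrow> (\<forall>i. Suc i < length w \<longrightarrow> w ! Suc i \<noteq> inv_letter (w ! i))"

definition cyclically_reduced :: "'g word \<Rightarrow> bool" where
  "cyclically_reduced w \<longleftrightarrow> reduced w \<and> (w \<noteq> [] \<longrightarrow> hd w \<noteq> inv_letter (last w))"

inductive cancel_step :: "'g word \<Rightarrow> 'g word \<Rightarrow> bool" where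
  "cancel_step (u @ [a, inv_letter a] @ v) (u @ v)"

definition free_eq :: "'g word \<Rightarrow> 'g word \<Rightarrow> bool" where
  "free_eq = equivclp cancel_step"

definition words_over :: "'g set \<Rightarrow> 'g word set" where
  "words_over X = {w. \<forall>a \<in> set w. fst a \<in> X}"

inductive_set conj_products :: "'g word set \<Rightarrow> 'g word set \<Rightarrow> 'g word set"
  for Conj R where
  nil: "[] \<in> conj_products Conj R"
| pos: "\<lbrakk>u \<in> Conj; r \<in> R; w \<in> conj_products Conj R\<rbrakk>
          \<Longrightarrow> u @ r @ inv_word u @ w \<in> conj_products Conj R"
| neg: "\<lbrakk>u \<in> Conj; r \<in> R; w \<in> conj_products Conj R\<rbrakk>
          \<Longrightarrow> u @ inv_word r @ inv_word u @ w \<in> conj_products Conj R"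

text \<open>w represents an element of the normal closure of R in the subgroup generated
  (as a group) by the conjugator words Conj (Conj assumed closed under products
  and inverses).\<close>
definition in_normal_closure :: "'g word set \<Rightarrow> 'g word set \<Rightarrow> 'g word \<Rightarrow> bool" where
  "in_normal_closure Conj R w \<longleftrightarrow> (\<exists>v \<in> conj_products Conj R. free_eq w v)"

text \<open>The setting: Y = {y_1..y_m}; Y_C has letters a_{j,i} = (j,i), 1 \<le> j \<le> C, 1 \<le> i \<le> m.\<close>
definition YC :: "nat \<Rightarrow> nat \<Rightarrow> (nat \<times> nat) set" where
  "YC C m = {(j, i). 1 \<le> j \<and> j \<le> C \<and> 1 \<le> i \<and> i \<le> m}"

definition A_word :: "nat \<Rightarrow> nat \<Rightarrow> (nat \<times> nat) word" where
  "A_word C i = map (\<lambda>j. ((j, i), False)) [1..<Suc C]"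

text \<open>r_C = r(A_1,...,A_m) for a positive word r over Y, given as a list of indices.\<close>
definition subst_C :: "nat \<Rightarrow> nat list \<Rightarrow> (nat \<times> nat) word" where
  "subst_C C r = concat (map (A_word C) r)"

definition S_C :: "nat \<Rightarrow> nat list set \<Rightarrow> (nat \<times> nat) word set" where
  "S_C C S = subst_C C ` S"

definition F_words :: "nat \<Rightarrow> nat \<Rightarrow> (nat \<times> nat) word set" where
  "F_words C m = {concat (map (\<lambda>(i, e). if e then inv_word (A_word C i) else A_word C i) xs)
                  | xs. \<forall>p \<in> set xs. 1 \<le> fst p \<and> fst p \<le> m}"

end

theory Submission
  imports Defs
begin


lemma inv_letter_inv[simp]: "inv_letter (inv_letter a) = a"
  by (cases a) (simp add: inv_letter_def)

lemma inv_letter_neq[simp]: "inv_letter a \<noteq> a" "a \<noteq> inv_letter a"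
  by (cases a; simp add: inv_letter_def)+

lemma inv_word_nil[simp]: "inv_word [] = []"
  by (simp add: inv_word_def)

lemma inv_word_Cons[simp]: "inv_word (a # w) = inv_word w @ [inv_letter a]"
  by (simp add: inv_word_def)

lemma inv_word_append[simp]: "inv_word (u @ v) = inv_word v @ inv_word u"
  by (simp add: inv_word_def)

lemma inv_word_inv[simp]: "inv_word (inv_word w) = w"
  by (simp add: inv_word_def rev_map comp_def)

lemma inv_word_length[simp]: "length (inv_word w) = length w"
  by (simp add: inv_word_def)

lemma cancel_step_cong: "cancel_step x y \<Longrightarrow> cancel_step (p @ x @ q) (p @ y @ q)"
proof (induction rule: cancel_step.induct)
  case (1 u a v)
  have "cancel_step ((p @ u) @ [a, inv_letter a] @ (v @ q)) ((p @ u) @ (v @ q))"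
    by (rule cancel_step.intros)
  then show ?case by simp
qed

lemma free_eq_refl[simp]: "free_eq x x"
  by (simp add: free_eq_def)

lemma free_eq_sym: "free_eq x y \<Longrightarrow> free_eq y x"
  unfolding free_eq_def by (rule equivclp_sym)

lemma free_eq_trans [trans]: "free_eq x y \<Longrightarrow> free_eq y z \<Longrightarrow> free_eq x z"
  unfolding free_eq_def by (rule equivclp_trans)

lemma free_eq_cong: "free_eq x y \<Longrightarrow> free_eq (p @ x @ q) (p @ y @ q)"
  unfolding free_eq_def
proof (induction rule: equivclp_induct)
  case base
  then show ?case by simp
next
  case (step y z)
  then show ?case
    by (meson cancel_step_cong equivclp_into_equivclp)
qed

lemma free_eq_cancel: "free_eq (p @ [a, inv_letter a] @ q) (p @ q)"
  unfolding free_eq_def by (rule r_into_equivclp) (rule cancel_step.intros)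

lemma free_eq_inv_right: "free_eq (p @ w @ inv_word w @ q) (p @ q)"
proof (induction w arbitrary: p q)
  case Nil
  then show ?case by simp
next
  case (Cons a w)
  have "free_eq (p @ (a # w) @ inv_word (a # w) @ q) ((p @ [a]) @ w @ inv_word w @ ([inv_letter a] @ q))"
    by simp
  also have "free_eq \<dots> ((p @ [a]) @ [inv_letter a] @ q)" using Cons by blast
  also have "(p @ [a]) @ [inv_letter a] @ q = p @ [a, inv_letter a] @ q" by simp
  also have "free_eq \<dots> (p @ q)" by (rule free_eq_cancel)
  finally show ?case by (blast intro: free_eq_trans)
qed

lemma free_eq_inv_left: "free_eq (p @ inv_word w @ w @ q) (p @ q)"
  using free_eq_inv_right[of p "inv_word w" q] by simp

lemma cancel_step_inv: "cancel_step x y \<Longrightarrow> cancel_step (inv_word x) (inv_word y)"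
proof (induction rule: cancel_step.induct)
  case (1 u a v)
  have "cancel_step (inv_word v @ [a, inv_letter a] @ inv_word u) (inv_word v @ inv_word u)"
    by (rule cancel_step.intros)
  then show ?case by simp
qed

lemma free_eq_inv: "free_eq x y \<Longrightarrow> free_eq (inv_word x) (inv_word y)"
  unfolding free_eq_def
proof (induction rule: equivclp_induct)
  case base
  then show ?case by simp
next
  case (step y z)
  then show ?case
    by (meson cancel_step_inv equivclp_into_equivclp)
qed

lemma conj_products_append:
  "x \<in> conj_products Conj R \<Longrightarrow> y \<in> conj_products Conj R \<Longrightarrow> x @ y \<in> conj_products Conj R"
  by (induction rule: conj_products.induct) (auto intro: conj_products.intros)

lemma conj_products_inv:
  "x \<in> conj_products Conj R \<Longrightarrow> inv_word x \<in> conj_products Conj R"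
proof (induction rule: conj_products.induct)
  case nil
  then show ?case by (simp add: conj_products.nil)
next
  case (pos u r w)
  have "u @ inv_word r @ inv_word u @ [] \<in> conj_products Conj R"
    using pos by (blast intro: conj_products.intros)
  then show ?case using pos conj_products_append by fastforce
next
  case (neg u r w)
  have "u @ r @ inv_word u @ [] \<in> conj_products Conj R"
    using neg by (blast intro: conj_products.intros)
  then show ?case using neg conj_products_append by fastforce
qed

lemma inc_free_eq: "in_normal_closure Conj R x \<Longrightarrow> free_eq x y \<Longrightarrow> in_normal_closure Conj R y"
  unfolding in_normal_closure_def by (meson free_eq_sym free_eq_trans)

lemma inc_nil: "in_normal_closure Conj R []"
  unfolding in_normal_closure_def using conj_products.nil free_eq_refl by blast

lemma inc_append: "in_normal_closure Conj R x \<Longrightarrow> in_normal_closure Conj R y \<Longrightarrow> in_normal_closure Conj R (x @ y)"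
  unfolding in_normal_closure_def
proof (elim bexE)
  fix v v' assume "v \<in> conj_products Conj R" "free_eq x v" "v' \<in> conj_products Conj R" "free_eq y v'"
  then have "free_eq (x @ y) (v @ v')"
    by (metis append.right_neutral append_Nil free_eq_cong free_eq_trans)
  then show "\<exists>v\<in>conj_products Conj R. free_eq (x @ y) v"
    using \<open>v \<in> _\<close> \<open>v' \<in> _\<close> conj_products_append by blast
qed

lemma inc_inv: "in_normal_closure Conj R x \<Longrightarrow> in_normal_closure Conj R (inv_word x)"
  unfolding in_normal_closure_def using free_eq_inv conj_products_inv by blast

lemma conj_products_conj:
  assumes closed: "\<And>a b. a \<in> Conj \<Longrightarrow> b \<in> Conj \<Longrightarrow> a @ b \<in> Conj"
  shows "x \<in> conj_products Conj R \<Longrightarrow> u \<in> Conj \<Longrightarrow>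
     \<exists>v \<in> conj_products Conj R. free_eq (u @ x @ inv_word u) v"
proof (induction rule: conj_products.induct)
  case nil
  then show ?case using free_eq_inv_right[of "[]" u "[]"] by (auto intro: conj_products.nil)
next
  case (pos u1 r w)
  then obtain v where v: "v \<in> conj_products Conj R" "free_eq (u @ w @ inv_word u) v" by blast
  have e: "free_eq ((u @ u1) @ r @ inv_word (u @ u1) @ (u @ w @ inv_word u))
                     ((u @ u1) @ r @ inv_word (u1) @ (w @ inv_word u))"
    using free_eq_inv_left[of "(u @ u1) @ r @ inv_word u1" u "w @ inv_word u"] by simp
  have "(u @ u1) @ r @ inv_word (u @ u1) @ v \<in> conj_products Conj R"
    using pos v closed by (blast intro: conj_products.intros)
  moreover have "free_eq (u @ (u1 @ r @ inv_word u1 @ w) @ inv_word u) ((u @ u1) @ r @ inv_word (u @ u1) @ v)"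
  proof -
    have "free_eq ((u @ u1) @ r @ inv_word (u @ u1) @ (u @ w @ inv_word u)) ((u @ u1) @ r @ inv_word (u @ u1) @ v)"
      using free_eq_cong[OF v(2), of "(u @ u1) @ r @ inv_word (u @ u1)" "[]"] by simp
    then show ?thesis using e by simp (meson free_eq_sym free_eq_trans)
  qed
  ultimately show ?case by blast
next
  case (neg u1 r w)
  then obtain v where v: "v \<in> conj_products Conj R" "free_eq (u @ w @ inv_word u) v" by blast
  have e: "free_eq ((u @ u1) @ inv_word r @ inv_word (u @ u1) @ (u @ w @ inv_word u))
                     ((u @ u1) @ inv_word r @ inv_word (u1) @ (w @ inv_word u))"
    using free_eq_inv_left[of "(u @ u1) @ inv_word r @ inv_word u1" u "w @ inv_word u"] by simp
  have "(u @ u1) @ inv_word r @ inv_word (u @ u1) @ v \<in> conj_products Conj R"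
    using neg v closed by (blast intro: conj_products.intros)
  moreover have "free_eq (u @ (u1 @ inv_word r @ inv_word u1 @ w) @ inv_word u) ((u @ u1) @ inv_word r @ inv_word (u @ u1) @ v)"
  proof -
    have "free_eq ((u @ u1) @ inv_word r @ inv_word (u @ u1) @ (u @ w @ inv_word u)) ((u @ u1) @ inv_word r @ inv_word (u @ u1) @ v)"
      using free_eq_cong[OF v(2), of "(u @ u1) @ inv_word r @ inv_word (u @ u1)" "[]"] by simp
    then show ?thesis using e by simp (meson free_eq_sym free_eq_trans)
  qed
  ultimately show ?case by blast
qed

lemma inc_conj:
  assumes closed: "\<And>a b. a \<in> Conj \<Longrightarrow> b \<in> Conj \<Longrightarrow> a @ b \<in> Conj"
  shows "in_normal_closure Conj R x \<Longrightarrow> u \<in> Conj \<Longrightarrow> in_normal_closure Conj R (u @ x @ inv_word u)"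
  unfolding in_normal_closure_def
proof (elim bexE)
  fix v assume v: "v \<in> conj_products Conj R" "free_eq x v" and u: "u \<in> Conj"
  obtain v' where "v' \<in> conj_products Conj R" "free_eq (u @ v @ inv_word u) v'"
    using conj_products_conj[OF closed v(1) u] by blast
  moreover have "free_eq (u @ x @ inv_word u) (u @ v @ inv_word u)" using free_eq_cong[OF v(2)] by blast
  ultimately show "\<exists>v\<in>conj_products Conj R. free_eq (u @ x @ inv_word u) v"
    by (meson free_eq_trans)
qed



type_synonym item = "(nat \<times> bool) list + ((nat \<times> nat) \<times> bool)"

locale lc =
  fixes C :: nat and S :: "nat list set"
  assumes Cpos: "1 \<le> C"
begin

definition sig :: "(nat \<times> bool) list \<Rightarrow> (nat \<times> nat) word" where
  "sig xs = concat (map (\<lambda>(i, e). if e then inv_word (A_word C i) else A_word C i) xs)"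

lemma sig_nil[simp]: "sig [] = []" by (simp add: sig_def)
lemma sig_append[simp]: "sig (x @ y) = sig x @ sig y" by (simp add: sig_def)

lemma sig_Cons[simp]: "sig ((i, e) # xs) = (if e then inv_word (A_word C i) else A_word C i) @ sig xs"
  by (simp add: sig_def)

lemma sig_inv[simp]: "sig (inv_word x) = inv_word (sig x)"
proof (induction x)
  case Nil then show ?case by simp
next
  case (Cons a x)
  obtain i e where a: "a = (i, e)" by (cases a)
  have "sig [inv_letter a] = inv_word (sig [a])" by (simp add: a inv_letter_def)
  then show ?case using Cons sig_append[of "[a]" x] by simp
qed

lemma range_sig_closed: "a \<in> range sig \<Longrightarrow> b \<in> range sig \<Longrightarrow> a @ b \<in> range sig"
proof -
  assume "a \<in> range sig" "b \<in> range sig"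
  then obtain x y where "a = sig x" "b = sig y" by blast
  then have "a @ b = sig (x @ y)" by simp
  then show ?thesis by (rule image_eqI) simp
qed

definition Nset :: "(nat \<times> nat) word \<Rightarrow> bool" where
  "Nset w = in_normal_closure (range sig) (S_C C S) w"

definition nrmY :: "(nat \<times> bool) list \<Rightarrow> bool" where
  "nrmY x = Nset (sig x)"

lemma Nset_free: "Nset x \<Longrightarrow> free_eq x y \<Longrightarrow> Nset y"
  unfolding Nset_def by (rule inc_free_eq)

lemma Nset_nil: "Nset []" unfolding Nset_def by (rule inc_nil)
lemma Nset_append: "Nset x \<Longrightarrow> Nset y \<Longrightarrow> Nset (x @ y)" unfolding Nset_def by (rule inc_append)
lemma Nset_inv: "Nset x \<Longrightarrow> Nset (inv_word x)" unfolding Nset_def by (rule inc_inv)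
lemma Nset_conj: "Nset x \<Longrightarrow> Nset (sig u @ x @ inv_word (sig u))"
  unfolding Nset_def by (rule inc_conj) (auto intro: range_sig_closed)

lemma Nset_cancel: "Nset (p @ x @ inv_word x @ q) \<longleftrightarrow> Nset (p @ q)"
  by (meson Nset_free free_eq_inv_right free_eq_sym)

lemma Nset_cancel': "Nset (p @ inv_word x @ x @ q) \<longleftrightarrow> Nset (p @ q)"
  by (meson Nset_free free_eq_inv_left free_eq_sym)

lemma nrmY_nil[simp]: "nrmY []" by (simp add: nrmY_def Nset_nil)
lemma nrmY_append: "nrmY x \<Longrightarrow> nrmY y \<Longrightarrow> nrmY (x @ y)" by (simp add: nrmY_def Nset_append)
lemma nrmY_inv: "nrmY x \<Longrightarrow> nrmY (inv_word x)" by (simp add: nrmY_def Nset_inv)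
lemma nrmY_conj: "nrmY x \<Longrightarrow> nrmY (u @ x @ inv_word u)"
  using Nset_conj by (simp add: nrmY_def)
lemma nrmY_cancel: "nrmY (p @ x @ inv_word x @ q) \<longleftrightarrow> nrmY (p @ q)"
  using Nset_cancel[of "sig p" "sig x" "sig q"] by (simp add: nrmY_def)
lemma nrmY_cancel': "nrmY (p @ inv_word x @ x @ q) \<longleftrightarrow> nrmY (p @ q)"
  using Nset_cancel'[of "sig p" "sig x" "sig q"] by (simp add: nrmY_def)

lemma nrmY_rot: "nrmY (x @ y) \<Longrightarrow> nrmY (y @ x)"
proof -
  assume "nrmY (x @ y)"
  then have "nrmY (inv_word x @ (x @ y) @ inv_word (inv_word x))" by (rule nrmY_conj)
  then have "nrmY ([] @ inv_word x @ x @ (y @ x))" by simp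
  then show ?thesis using nrmY_cancel'[of "[]" x "y @ x"] by simp
qed

definition eqv :: "(nat \<times> bool) list \<Rightarrow> (nat \<times> bool) list \<Rightarrow> bool" where
  "eqv x y = nrmY (x @ inv_word y)"

lemma eqv_refl[simp]: "eqv x x"
  unfolding eqv_def using nrmY_cancel[of "[]" x "[]"] by simp

lemma eqv_sym: "eqv x y \<Longrightarrow> eqv y x"
  unfolding eqv_def using nrmY_inv by fastforce

lemma eqv_trans: "eqv x y \<Longrightarrow> eqv y z \<Longrightarrow> eqv x z"
  unfolding eqv_def using nrmY_append nrmY_cancel'[of x y "inv_word z"] by fastforce

lemma eqv_left: "eqv x y \<Longrightarrow> eqv (g @ x) (g @ y)"
  unfolding eqv_def using nrmY_conj[of "x @ inv_word y" g] by simp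

lemma eqv_right: "eqv x y \<Longrightarrow> eqv (x @ h) (y @ h)"
  unfolding eqv_def using nrmY_cancel[of x h "inv_word y"] by simp

lemma nrmY_eqv: "nrmY x \<longleftrightarrow> eqv x []"
  by (simp add: eqv_def)

lemma eqv_nrmY: "eqv x y \<Longrightarrow> nrmY x \<longleftrightarrow> nrmY y"
  by (meson eqv_sym eqv_trans nrmY_eqv)

definition repr :: "(nat \<times> bool) list \<Rightarrow> (nat \<times> bool) list" where
  "repr x = (SOME y. eqv x y)"

lemma repr_eqv: "eqv x (repr x)"
  unfolding repr_def by (rule someI[of _ x]) simp

lemma repr_cong: "eqv x y \<Longrightarrow> repr x = repr y"
proof -
  assume "eqv x y"
  then have "(\<lambda>z. eqv x z) = (\<lambda>z. eqv y z)"
    by (meson eqv_sym eqv_trans)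
  then show ?thesis unfolding repr_def by simp
qed

lemma repr_repr[simp]: "repr (repr x) = repr x"
  using repr_cong[OF eqv_sym[OF repr_eqv]] by simp

lemma nrmY_repr: "nrmY (repr x) \<longleftrightarrow> nrmY x"
  using eqv_nrmY repr_eqv by blast

end


context lc
begin

fun tauS :: "nat \<times> nat \<Rightarrow> bool \<Rightarrow> item list \<Rightarrow> item list" where
  "tauS v b (Inr (v', b') # L) = (if v' = v \<and> b' = (\<not> b) then L else Inr (v, b) # Inr (v', b') # L)"
| "tauS v b L = Inr (v, b) # L"

definition tau :: "(nat \<times> nat) option \<Rightarrow> bool \<Rightarrow> item list \<Rightarrow> item list" where
  "tau vo b L = (case vo of None \<Rightarrow> L | Some v \<Rightarrow> tauS v b L)"

fun fact :: "(nat \<times> bool) list \<Rightarrow> item list \<Rightarrow> item list" where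
  "fact g (Inl c # L) = (if nrmY (g @ c) then L else Inl (repr (g @ c)) # L)"
| "fact g L = (if nrmY g then L else Inl (repr g) # L)"

fun ok :: "item \<Rightarrow> bool" where
  "ok (Inl c) = (\<not> nrmY c \<and> repr c = c)"
| "ok (Inr _) = True"

fun adj :: "item \<Rightarrow> item \<Rightarrow> bool" where
  "adj (Inl _) (Inl _) = False"
| "adj (Inr (v, b)) (Inr (v', b')) = (\<not> (v' = v \<and> b' = (\<not> b)))"
| "adj _ _ = True"

fun nf :: "item list \<Rightarrow> bool" where
  "nf [] = True"
| "nf [x] = ok x"
| "nf (x # y # L) = (ok x \<and> adj x y \<and> nf (y # L))"

lemma adj_Inl[simp]: "adj (Inl c) y = (case y of Inl _ \<Rightarrow> False | Inr _ \<Rightarrow> True)"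
  by (cases y) auto

lemma nf_Cons: "nf (x # L) \<longleftrightarrow> ok x \<and> (L \<noteq> [] \<longrightarrow> adj x (hd L)) \<and> nf L"
  by (cases L) auto

lemma tauS_nf: "nf L \<Longrightarrow> nf (tauS v b L)"
  by (induction v b L rule: tauS.induct) (auto simp: nf_Cons)

lemma tauS_inv: "nf L \<Longrightarrow> tauS v (\<not> b) (tauS v b L) = L"
proof (induction v b L rule: tauS.induct)
  case (1 v b v' b' L)
  then show ?case
  proof (cases "v' = v \<and> b' = (\<not> b)")
    case True
    then show ?thesis using 1
    proof (cases L)
      case (Cons x L'')
      then show ?thesis using 1 True by (cases x) (auto simp: nf_Cons)
    qed simp
  next
    case False
    then show ?thesis by auto
  qed
qed auto

lemma tau_nf: "nf L \<Longrightarrow> nf (tau vo b L)"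
  by (cases vo) (auto simp: tau_def tauS_nf)

lemma tau_inv: "nf L \<Longrightarrow> tau vo (\<not> b) (tau vo b L) = L"
  by (cases vo) (auto simp: tau_def tauS_inv)

lemma tau_inv': "nf L \<Longrightarrow> tau vo b (tau vo (\<not> b) L) = L"
  using tau_inv[of L vo "\<not> b"] by simp

lemma tau_None[simp]: "tau None b L = L" by (simp add: tau_def)

lemma fact_nf: "nf L \<Longrightarrow> nf (fact g L)"
  by (induction g L rule: fact.induct) (auto simp: nf_Cons nrmY_repr)

lemma fact_eqv: "eqv g g' \<Longrightarrow> fact g L = fact g' L"
proof -
  assume e: "eqv g g'"
  show ?thesis
  proof (cases "\<exists>c L'. L = Inl c # L'")
    case True
    then obtain c L' where L: "L = Inl c # L'" by blast
    have "eqv (g @ c) (g' @ c)" using e by (rule eqv_right)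
    then show ?thesis using eqv_nrmY repr_cong L by auto
  next
    case False
    then have "fact g L = (if nrmY g then L else Inl (repr g) # L)"
      "fact g' L = (if nrmY g' then L else Inl (repr g') # L)"
      by (cases L; cases "hd L"; auto)+
    then show ?thesis using e eqv_nrmY repr_cong by auto
  qed
qed

lemma fact_nil: "nf L \<Longrightarrow> fact [] L = L"
  by (induction "[] :: (nat \<times> bool) list" L rule: fact.induct) (auto simp: nf_Cons)

lemma fact_N: "nrmY g \<Longrightarrow> nf L \<Longrightarrow> fact g L = L"
  using fact_eqv[of g "[]" L] fact_nil by (simp add: nrmY_eqv)

lemma fact_other: "\<not> (\<exists>c L'. L = Inl c # L') \<Longrightarrow> fact g L = (if nrmY g then L else Inl (repr g) # L)"
  by (cases L; cases "hd L"; auto)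

lemma fact_comp: "nf L \<Longrightarrow> fact g (fact h L) = fact (g @ h) L"
proof -
  assume nfL: "nf L"
  show ?thesis
  proof (cases "\<exists>c L'. L = Inl c # L'")
    case True
    then obtain c L' where L: "L = Inl c # L'" by blast
    have L': "\<not> (\<exists>c L''. L' = Inl c # L'')" using nfL L by (auto simp: nf_Cons)
    show ?thesis
    proof (cases "nrmY (h @ c)")
      case True
      have e: "eqv (g @ h @ c) g"
        using True eqv_left[of "h @ c" "[]" g] by (simp add: nrmY_eqv)
      then show ?thesis using True e eqv_nrmY repr_cong L fact_other[OF L'] by auto
    next
      case False
      have e: "eqv (g @ repr (h @ c)) (g @ h @ c)"
        using eqv_left[OF eqv_sym[OF repr_eqv]] by blast
      then show ?thesis using False eqv_nrmY repr_cong L by auto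
    qed
  next
    case False
    show ?thesis
    proof (cases "nrmY h")
      case True
      have e: "eqv (g @ h) g"
        using True eqv_left[of "h" "[]" g] by (simp add: nrmY_eqv)
      then show ?thesis using True eqv_nrmY repr_cong fact_other[OF False] by auto
    next
      case nh: False
      have e: "eqv (g @ repr h) (g @ h)"
        using eqv_left[OF eqv_sym[OF repr_eqv]] by blast
      then show ?thesis using nh eqv_nrmY repr_cong fact_other[OF False] by auto
    qed
  qed
qed

lemma fact_inv: "nf L \<Longrightarrow> fact (inv_word g) (fact g L) = L"
proof -
  assume L: "nf L"
  have "eqv (inv_word g @ g) []"
    unfolding eqv_def using nrmY_cancel'[of "[]" g "[]"] by simp
  then show ?thesis using fact_comp[OF L] fact_eqv fact_nil[OF L] by metis
qed

end


context lc
begin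

definition vt :: "nat \<Rightarrow> nat \<Rightarrow> (nat \<times> nat) option" where
  "vt j i = (if j = 0 \<or> C \<le> j then None else Some (j, i))"

fun sp :: "(nat \<times> nat) \<times> bool \<Rightarrow> (nat \<times> nat) option" where
  "sp ((j, i), e) = (if e then vt j i else vt (j - 1) i)"

fun ep :: "(nat \<times> nat) \<times> bool \<Rightarrow> (nat \<times> nat) option" where
  "ep ((j, i), e) = (if e then vt (j - 1) i else vt j i)"

fun fl :: "(nat \<times> nat) \<times> bool \<Rightarrow> (nat \<times> bool) list" where
  "fl ((j, i), e) = (if j = C then [(i, e)] else [])"

definition actl :: "(nat \<times> nat) \<times> bool \<Rightarrow> item list \<Rightarrow> item list" where
  "actl a L = tau (sp a) False (fact (fl a) (tau (ep a) True L))"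

definition actw :: "(nat \<times> nat) word \<Rightarrow> item list \<Rightarrow> item list" where
  "actw w L = foldr actl w L"

definition fP :: "(nat \<times> nat) word \<Rightarrow> (nat \<times> bool) list" where
  "fP w = concat (map fl w)"

fun conn :: "(nat \<times> nat) word \<Rightarrow> bool" where
  "conn [] = True"
| "conn [a] = True"
| "conn (a # b # w) = (ep a = sp b \<and> conn (b # w))"

lemma sp_inv[simp]: "sp (inv_letter a) = ep a"
  by (cases a) (auto simp: inv_letter_def)
lemma ep_inv[simp]: "ep (inv_letter a) = sp a"
  by (cases a) (auto simp: inv_letter_def)
lemma fl_inv[simp]: "fl (inv_letter a) = inv_word (fl a)"
  by (cases a) (auto simp: inv_letter_def)

lemma fP_nil[simp]: "fP [] = []" by (simp add: fP_def)
lemma fP_Cons[simp]: "fP (a # w) = fl a @ fP w" by (simp add: fP_def)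
lemma fP_append[simp]: "fP (u @ w) = fP u @ fP w" by (simp add: fP_def)

lemma actw_nil[simp]: "actw [] L = L" by (simp add: actw_def)
lemma actw_Cons[simp]: "actw (a # w) L = actl a (actw w L)" by (simp add: actw_def)
lemma actw_append[simp]: "actw (u @ w) L = actw u (actw w L)" by (simp add: actw_def)

lemma actl_nf: "nf L \<Longrightarrow> nf (actl a L)"
  by (simp add: actl_def tau_nf fact_nf)

lemma actw_nf: "nf L \<Longrightarrow> nf (actw w L)"
  by (induction w) (auto simp: actl_nf)

lemma actl_inv: "nf L \<Longrightarrow> actl (inv_letter a) (actl a L) = L"
proof -
  assume L: "nf L"
  let ?L1 = "tau (ep a) True L"
  have n1: "nf ?L1" using L by (rule tau_nf)
  have n2: "nf (fact (fl a) ?L1)" using n1 by (rule fact_nf)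
  have "actl (inv_letter a) (actl a L) =
      tau (ep a) False (fact (inv_word (fl a)) (tau (sp a) True (tau (sp a) False (fact (fl a) ?L1))))"
    by (simp add: actl_def)
  also have "\<dots> = tau (ep a) False (fact (inv_word (fl a)) (fact (fl a) ?L1))"
    using tau_inv[OF n2, of "sp a" False] by simp
  also have "\<dots> = tau (ep a) False ?L1" using fact_inv[OF n1] by simp
  also have "\<dots> = L" using tau_inv'[OF L, of "ep a" False] by simp
  finally show ?thesis .
qed

lemma actl_inv': "nf L \<Longrightarrow> actl a (actl (inv_letter a) L) = L"
  using actl_inv[of L "inv_letter a"] by simp

lemma actw_inv: "nf L \<Longrightarrow> actw (inv_word u) (actw u L) = L"
proof (induction u)
  case Nil then show ?case by simp
next
  case (Cons a u)
  have "actw (inv_word (a # u)) (actw (a # u) L) = actw (inv_word u) (actl (inv_letter a) (actl a (actw u L)))"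
    by simp
  also have "\<dots> = actw (inv_word u) (actw u L)" using actl_inv actw_nf Cons.prems by simp
  finally show ?case using Cons by simp
qed

lemma actw_inv': "nf L \<Longrightarrow> actw u (actw (inv_word u) L) = L"
  using actw_inv[of L "inv_word u"] by simp

lemma actw_conn: "conn P \<Longrightarrow> P \<noteq> [] \<Longrightarrow> nf L \<Longrightarrow>
   actw P L = tau (sp (hd P)) False (fact (fP P) (tau (ep (last P)) True L))"
proof (induction P rule: conn.induct)
  case 1 then show ?case by simp
next
  case (2 a) then show ?case by (simp add: actl_def)
next
  case (3 a b w)
  let ?X = "fact (fP (b # w)) (tau (ep (last (b # w))) True L)"
  have nX: "nf ?X" using 3 by (simp add: tau_nf fact_nf)
  have "actw (a # b # w) L = actl a (tau (sp b) False ?X)" using 3 by simp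
  also have "\<dots> = tau (sp a) False (fact (fl a) (tau (sp b) True (tau (sp b) False ?X)))"
    using 3 by (simp add: actl_def)
  also have "\<dots> = tau (sp a) False (fact (fl a) ?X)" using tau_inv[OF nX, of "sp b" False] by simp
  also have "\<dots> = tau (sp a) False (fact (fl a @ fP (b # w)) (tau (ep (last (b # w))) True L))"
    using fact_comp 3 by (simp add: tau_nf)
  finally show ?case by simp
qed

lemma conn_upt: "conn (map (\<lambda>j. ((j, i), False)) [a..<b])"
proof (induction "b - a" arbitrary: a)
  case 0 then show ?case by simp
next
  case (Suc k)
  then have ab: "a < b" by simp
  show ?case
  proof (cases "Suc a < b")
    case True
    then have "[a..<b] = a # Suc a # [Suc (Suc a)..<b]" by (simp add: upt_rec)
    moreover have "conn (map (\<lambda>j. ((j, i), False)) [Suc a..<b])" using Suc by simp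
    moreover have "[Suc a..<b] = Suc a # [Suc (Suc a)..<b]" using True by (simp add: upt_rec)
    ultimately show ?thesis by simp
  next
    case False
    then have "[a..<b] = [a]" using ab by (simp add: upt_rec)
    then show ?thesis by simp
  qed
qed

lemma A_word_split: "A_word C i = map (\<lambda>j. ((j, i), False)) [1..<C] @ [((C, i), False)]"
  using Cpos by (simp add: A_word_def)

lemma fP_low: "fP (map (\<lambda>j. ((j, i), False)) [a..<C]) = []"
  by (simp add: fP_def)

lemma A_word_conn: "conn (A_word C i)"
  unfolding A_word_def by (rule conn_upt)

lemma actw_A: "nf L \<Longrightarrow> actw (A_word C i) L = fact [(i, False)] L"
proof -
  assume L: "nf L"
  have ne: "A_word C i \<noteq> []" using Cpos by (simp add: A_word_def)
  have h: "hd (A_word C i) = ((1, i), False)" using Cpos by (simp add: A_word_def upt_rec)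
  have l: "last (A_word C i) = ((C, i), False)" by (simp add: A_word_split)
  have f: "fP (A_word C i) = [(i, False)]" by (simp add: A_word_split fP_low)
  show ?thesis using actw_conn[OF A_word_conn ne L] h l f by (simp add: vt_def)
qed

lemma actw_rC: "nf L \<Longrightarrow> actw (subst_C C r) L = fact (map (\<lambda>i. (i, False)) r) L"
proof (induction r)
  case Nil then show ?case by (simp add: subst_C_def fact_nil)
next
  case (Cons i r)
  have "actw (subst_C C (i # r)) L = actw (A_word C i) (actw (subst_C C r) L)"
    by (simp add: subst_C_def)
  also have "\<dots> = fact [(i, False)] (fact (map (\<lambda>i. (i, False)) r) L)"
    using Cons actw_A fact_nf by simp
  also have "\<dots> = fact (map (\<lambda>i. (i, False)) (i # r)) L" using fact_comp Cons.prems by simp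
  finally show ?case .
qed

lemma rC_nrm: "r \<in> S \<Longrightarrow> nrmY (map (\<lambda>i. (i, False)) r)"
proof -
  assume r: "r \<in> S"
  have s: "sig (map (\<lambda>i. (i, False)) r) = subst_C C r"
    by (simp add: sig_def subst_C_def comp_def)
  have "[] @ subst_C C r @ inv_word [] @ [] \<in> conj_products (range sig) (S_C C S)"
    by (rule conj_products.pos) (auto simp: S_C_def r intro: conj_products.nil image_eqI[of "[]" sig "[]"])
  then have "Nset (subst_C C r)" unfolding Nset_def in_normal_closure_def
    using free_eq_refl by fastforce
  then show ?thesis using s by (simp add: nrmY_def)
qed

lemma actw_rel: "r \<in> S_C C S \<Longrightarrow> nf L \<Longrightarrow> actw r L = L"
  using actw_rC rC_nrm fact_N by (auto simp: S_C_def)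

lemma actw_conj_products: "x \<in> conj_products Conj (S_C C S) \<Longrightarrow> nf L \<Longrightarrow> actw x L = L"
proof (induction arbitrary: L rule: conj_products.induct)
  case nil then show ?case by simp
next
  case (pos u r w)
  have "actw (u @ r @ inv_word u @ w) L = actw u (actw r (actw (inv_word u) (actw w L)))" by simp
  also have "\<dots> = actw u (actw (inv_word u) (actw w L))" using pos actw_rel actw_nf by simp
  also have "\<dots> = L" using pos actw_inv' actw_nf by simp
  finally show ?case .
next
  case (neg u r w)
  have n: "nf (actw (inv_word u) (actw w L))" using neg actw_nf by blast
  have "actw (inv_word r) (actw (inv_word u) (actw w L)) = actw (inv_word r) (actw r (actw (inv_word u) (actw w L)))"
    using neg actw_rel n by simp
  also have "\<dots> = actw (inv_word u) (actw w L)" using actw_inv n by simp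
  finally have "actw (u @ inv_word r @ inv_word u @ w) L = actw u (actw (inv_word u) (actw w L))" by simp
  also have "\<dots> = L" using neg actw_inv' actw_nf by simp
  finally show ?case .
qed

lemma actw_cancel: "cancel_step x y \<Longrightarrow> nf L \<Longrightarrow> actw x L = actw y L"
proof (induction rule: cancel_step.induct)
  case (1 u a v)
  then show ?case using actl_inv' actw_nf by simp
qed

lemma actw_free_eq: "free_eq x y \<Longrightarrow> nf L \<Longrightarrow> actw x L = actw y L"
  unfolding free_eq_def
proof (induction rule: equivclp_induct)
  case base then show ?case by simp
next
  case (step y z)
  then show ?case using actw_cancel by metis
qed

lemma actw_trivial: "in_normal_closure Conj (S_C C S) W \<Longrightarrow> actw W [] = []"
  unfolding in_normal_closure_def using actw_free_eq actw_conj_products nf.simps(1) by metis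

end


context lc
begin

definition pre :: "item list \<Rightarrow> (nat \<times> nat) option \<Rightarrow> bool" where
  "pre L u = (case u of Some v \<Rightarrow> (L = [] \<or> hd L \<noteq> Inr (v, False))
                      | None \<Rightarrow> (L = [] \<or> (\<exists>v. hd L = Inr (v, False))))"

definition post :: "item list \<Rightarrow> (nat \<times> nat) option \<Rightarrow> bool" where
  "post L s = (L \<noteq> [] \<and> (case s of Some v \<Rightarrow> hd L = Inr (v, False)
                      | None \<Rightarrow> (isl (hd L) \<or> (\<exists>v. hd L = Inr (v, True)))))"

lemma pre_nil[simp]: "pre [] u" by (cases u) (auto simp: pre_def)

lemma post_pre: "post L s \<Longrightarrow> u \<noteq> s \<Longrightarrow> pre L u"
  by (cases u; cases s) (auto simp: pre_def post_def)

lemma tauS_nocancel: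
  assumes a: "L = [] \<or> hd L \<noteq> Inr (v, \<not> b)"
  shows "tauS v b L = Inr (v, b) # L"
proof (cases L)
  case (Cons x L')
  then show ?thesis using a by (cases x) (auto split: if_splits)
qed simp

lemma not_isl_hd: "L = [] \<or> \<not> isl (hd L) \<Longrightarrow> \<not> (\<exists>c L'. L = Inl c # L')"
  by auto

lemma step_post:
  assumes L: "nf L" and pr: "pre L u" and ex: "\<not> (s = u \<and> nrmY g)"
  shows "post (tau s False (fact g (tau u True L))) s"
proof (cases u)
  case (Some vu)
  have L1: "tau u True L = Inr (vu, True) # L"
    using pr Some by (simp add: tau_def pre_def tauS_nocancel)
  have F: "fact g (tau u True L) = (if nrmY g then Inr (vu, True) # L else Inl (repr g) # Inr (vu, True) # L)"
    using L1 fact_other[of "Inr (vu, True) # L" g] by simp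
  show ?thesis
  proof (cases s)
    case None
    then show ?thesis using F by (simp add: post_def)
  next
    case (Some vs)
    show ?thesis
    proof (cases "nrmY g")
      case True
      then have "vs \<noteq> vu" using ex Some \<open>u = Some vu\<close> by auto
      then show ?thesis using F True Some by (simp add: tau_def post_def tauS_nocancel)
    next
      case False
      then show ?thesis using F Some by (simp add: tau_def post_def)
    qed
  qed
next
  case None
  have pL: "L = [] \<or> (\<exists>v. hd L = Inr (v, False))" using pr None by (simp add: pre_def)
  then have ni: "\<not> (\<exists>c L'. L = Inl c # L')" by auto
  have F: "fact g (tau u True L) = (if nrmY g then L else Inl (repr g) # L)"
    using None fact_other[OF ni] by simp
  show ?thesis
  proof (cases s)
    case None
    then have "\<not> nrmY g" using ex \<open>u = None\<close> by auto
    then show ?thesis using F None by (simp add: post_def)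
  next
    case (Some vs)
    show ?thesis
    proof (cases "nrmY g")
      case True
      have "L = [] \<or> hd L \<noteq> Inr (vs, \<not> False)" using pL by auto
      then show ?thesis using F True Some by (simp add: tau_def post_def tauS_nocancel)
    next
      case False
      then show ?thesis using F Some by (simp add: tau_def post_def)
    qed
  qed
qed

lemma seg_exists: "w \<noteq> [] \<Longrightarrow> \<exists>P w2. w = P @ w2 \<and> P \<noteq> [] \<and> conn P \<and> (w2 \<noteq> [] \<longrightarrow> ep (last P) \<noteq> sp (hd w2))"
proof (induction w)
  case Nil then show ?case by simp
next
  case (Cons a w)
  show ?case
  proof (cases "w = []")
    case True
    then show ?thesis by (intro exI[of _ "[a]"] exI[of _ "[]"]) simp
  next
    case False
    then obtain P w2 where P: "w = P @ w2" "P \<noteq> []" "conn P" "w2 \<noteq> [] \<longrightarrow> ep (last P) \<noteq> sp (hd w2)"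
      using Cons by blast
    show ?thesis
    proof (cases "ep a = sp (hd w)")
      case True
      obtain b P' where bP: "P = b # P'" using P(2) by (cases P) auto
      have "conn (a # P)" using True P bP by simp
      then show ?thesis using P bP by (intro exI[of _ "a # P"] exI[of _ w2]) simp
    next
      case False
      then show ?thesis using \<open>w \<noteq> []\<close> by (intro exI[of _ "[a]"] exI[of _ w]) simp
    qed
  qed
qed

definition Hyp :: "(nat \<times> nat) word \<Rightarrow> bool" where
  "Hyp W = (\<forall>p P q. W = p @ P @ q \<longrightarrow> P \<noteq> [] \<longrightarrow> conn P \<longrightarrow> sp (hd P) = ep (last P) \<longrightarrow> \<not> nrmY (fP P))"

lemma main_post:
  assumes H: "Hyp W"
  shows "W = p @ w \<Longrightarrow> w \<noteq> [] \<Longrightarrow> post (actw w []) (sp (hd w))"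
proof (induction w arbitrary: p rule: length_induct)
  case (1 w)
  obtain P w2 where P: "w = P @ w2" "P \<noteq> []" "conn P" "w2 \<noteq> [] \<longrightarrow> ep (last P) \<noteq> sp (hd w2)"
    using seg_exists[OF 1(3)] by blast
  let ?L = "actw w2 []"
  have nL: "nf ?L" using actw_nf by simp
  have pr: "pre ?L (ep (last P))"
  proof (cases "w2 = []")
    case True then show ?thesis by simp
  next
    case False
    have "length w2 < length w" using P by simp
    then have "post ?L (sp (hd w2))" using 1(1) False P(1) 1(2) by (metis append.assoc)
    then show ?thesis using post_pre P(4) False by blast
  qed
  have ex: "\<not> (sp (hd P) = ep (last P) \<and> nrmY (fP P))"
    using H P 1(2) unfolding Hyp_def by blast
  have "actw w [] = tau (sp (hd P)) False (fact (fP P) (tau (ep (last P)) True ?L))"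
    using actw_conn[OF P(3) P(2) nL] P(1) by simp
  moreover have "hd w = hd P" using P by simp
  ultimately show ?case using step_post[OF nL pr ex] by simp
qed

lemma main_exists:
  assumes "in_normal_closure Conj (S_C C S) W" "W \<noteq> []"
  shows "\<exists>p P q. W = p @ P @ q \<and> P \<noteq> [] \<and> conn P \<and> sp (hd P) = ep (last P) \<and> nrmY (fP P)"
proof (rule ccontr)
  assume "\<not> ?thesis"
  then have "Hyp W" unfolding Hyp_def by blast
  then have "post (actw W []) (sp (hd W))" using main_post[of W "[]" W] assms(2) by simp
  then show False using actw_trivial[OF assms(1)] by (simp add: post_def)
qed

end


lemma reduced_Nil[simp]: "reduced []" by (simp add: reduced_def)

lemma reduced_Cons: "reduced (a # w) \<longleftrightarrow> reduced w \<and> (w \<noteq> [] \<longrightarrow> hd w \<noteq> inv_letter a)"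
proof
  assume r: "reduced (a # w)"
  have "reduced w" unfolding reduced_def
  proof (intro allI impI)
    fix i assume "Suc i < length w"
    then show "w ! Suc i \<noteq> inv_letter (w ! i)" using r[unfolded reduced_def, rule_format, of "Suc i"] by simp
  qed
  moreover have "w \<noteq> [] \<longrightarrow> hd w \<noteq> inv_letter a"
    using r[unfolded reduced_def, rule_format, of 0] by (cases w) auto
  ultimately show "reduced w \<and> (w \<noteq> [] \<longrightarrow> hd w \<noteq> inv_letter a)" by blast
next
  assume r: "reduced w \<and> (w \<noteq> [] \<longrightarrow> hd w \<noteq> inv_letter a)"
  show "reduced (a # w)" unfolding reduced_def
  proof (intro allI impI)
    fix i assume i: "Suc i < length (a # w)"
    show "(a # w) ! Suc i \<noteq> inv_letter ((a # w) ! i)"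
    proof (cases i)
      case 0 then show ?thesis using r i by (cases w) auto
    next
      case (Suc k) then show ?thesis using r i unfolding reduced_def by auto
    qed
  qed
qed

lemma reduced_append: "reduced (xs @ ys) \<longleftrightarrow> reduced xs \<and> reduced ys \<and> (xs \<noteq> [] \<and> ys \<noteq> [] \<longrightarrow> hd ys \<noteq> inv_letter (last xs))"
  by (induction xs) (auto simp: reduced_Cons)

context lc
begin

lemma conn_Cons: "conn (a # w) \<longleftrightarrow> conn w \<and> (w \<noteq> [] \<longrightarrow> ep a = sp (hd w))"
  by (cases w) auto

lemma conn_append: "conn (xs @ ys) \<longleftrightarrow> conn xs \<and> conn ys \<and> (xs \<noteq> [] \<and> ys \<noteq> [] \<longrightarrow> ep (last xs) = sp (hd ys))"
  by (induction xs) (auto simp: conn_Cons)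

lemma vt_Some: "vt j i = Some v \<longleftrightarrow> (0 < j \<and> j < C \<and> v = (j, i))"
  by (auto simp: vt_def)

lemma vt_None: "vt j i = None \<longleftrightarrow> (j = 0 \<or> C \<le> j)"
  by (auto simp: vt_def)

lemma mono_pos:
  "conn P \<Longrightarrow> reduced P \<Longrightarrow> (\<forall>x\<in>set P. 1 \<le> fst (fst x)) \<Longrightarrow> (\<forall>x\<in>set (butlast P). ep x \<noteq> None) \<Longrightarrow>
   P \<noteq> [] \<Longrightarrow> hd P = ((j, i), False) \<Longrightarrow> last P = ((j + length P - 1, i), False)"
proof (induction P arbitrary: j)
  case Nil then show ?case by simp
next
  case (Cons a P)
  show ?case
  proof (cases "P = []")
    case True then show ?thesis using Cons by simp
  next
    case False
    obtain b P' where bP: "P = b # P'" using False by (cases P) auto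
    have a: "a = ((j, i), False)" using Cons by simp
    have ea: "ep a \<noteq> None" using Cons(5) bP by simp
    have eq: "ep a = sp b" using Cons(2) bP by simp
    have rb: "b \<noteq> inv_letter a" using Cons(3) bP by (simp add: reduced_Cons)
    obtain jb ib eb where b: "b = ((jb, ib), eb)" by (cases b) auto
    have jb1: "1 \<le> jb" using Cons(4) bP b by simp
    have "ep a = Some (j, i)" using ea a by (auto simp: vt_def split: if_splits)
    then have "sp b = Some (j, i)" using eq by simp
    then have bb: "b = ((j + 1, i), False)"
      using rb a b jb1 by (cases eb) (auto simp: vt_Some inv_letter_def)
    have "last P = ((j + 1 + length P - 1, i), False)"
      using Cons.IH[of "j + 1"] Cons(2-5) False bP bb
      by (auto simp: reduced_Cons conn_Cons)
    then show ?thesis using False by simp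
  qed
qed

lemma mono_neg:
  "conn P \<Longrightarrow> reduced P \<Longrightarrow> (\<forall>x\<in>set P. 1 \<le> fst (fst x)) \<Longrightarrow> (\<forall>x\<in>set (butlast P). ep x \<noteq> None) \<Longrightarrow>
   P \<noteq> [] \<Longrightarrow> hd P = ((j, i), True) \<Longrightarrow> last P = ((j + 1 - length P, i), True) \<and> length P \<le> j"
proof (induction P arbitrary: j)
  case Nil then show ?case by simp
next
  case (Cons a P)
  have a: "a = ((j, i), True)" using Cons by simp
  have j1: "1 \<le> j" using Cons(4) a by simp
  show ?case
  proof (cases "P = []")
    case True then show ?thesis using Cons j1 by simp
  next
    case False
    obtain b P' where bP: "P = b # P'" using False by (cases P) auto
    have ea: "ep a \<noteq> None" using Cons(5) bP by simp
    have eq: "ep a = sp b" using Cons(2) bP by simp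
    have rb: "b \<noteq> inv_letter a" using Cons(3) bP by (simp add: reduced_Cons)
    obtain jb ib eb where b: "b = ((jb, ib), eb)" by (cases b) auto
    have jb1: "1 \<le> jb" using Cons(4) bP b by simp
    have "ep a = Some (j - 1, i)" using ea a by (auto simp: vt_def split: if_splits)
    then have "sp b = Some (j - 1, i)" using eq by simp
    then have bb: "b = ((j - 1, i), True)" and j2: "2 \<le> j"
      using rb a b jb1 by (cases eb; auto simp: vt_Some inv_letter_def)+
    have "last P = ((j - 1 + 1 - length P, i), True) \<and> length P \<le> j - 1"
      using Cons.IH[of "j - 1"] Cons(2-5) False bP bb
      by (auto simp: reduced_Cons conn_Cons)
    then show ?thesis using False j2 by auto
  qed
qed

lemma passes_o:
  assumes "conn P" "reduced P" "\<forall>x\<in>set P. 1 \<le> fst (fst x)" "P \<noteq> []" "sp (hd P) = ep (last P)"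
  shows "\<exists>x\<in>set P. ep x = None"
proof (rule ccontr)
  assume "\<not> ?thesis"
  then have all: "\<forall>x\<in>set P. ep x \<noteq> None" by auto
  then have bl: "\<forall>x\<in>set (butlast P). ep x \<noteq> None" by (meson in_set_butlastD)
  have le: "ep (last P) \<noteq> None" using all assms(4) by simp
  obtain j i e where h: "hd P = ((j, i), e)" by (metis prod.collapse)
  show False
  proof (cases e)
    case False
    have l: "last P = ((j + length P - 1, i), False)"
      using mono_pos[OF assms(1-3) bl assms(4)] h False by simp
    have "vt (j - 1) i = vt (j + length P - 1) i" using assms(5) h l False by simp
    moreover have "vt (j + length P - 1) i \<noteq> None" using le l by simp
    moreover obtain n where "length P = Suc n" using assms(4) by (cases P) auto
    ultimately show False by (auto simp: vt_def split: if_splits)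
  next
    case True
    have l: "last P = ((j + 1 - length P, i), True)" "length P \<le> j"
      using mono_neg[OF assms(1-3) bl assms(4)] h True by simp_all
    have "vt j i = vt (j + 1 - length P - 1) i" using assms(5) h l True by simp
    moreover have "vt (j + 1 - length P - 1) i \<noteq> None" using le l by simp
    moreover obtain n where "length P = Suc n" using assms(4) by (cases P) auto
    ultimately show False using l(2) by (auto simp: vt_def split: if_splits)
  qed
qed

end


context lc
begin

definition prefA :: "nat \<Rightarrow> nat \<Rightarrow> (nat \<times> nat) word" where
  "prefA j i = map (\<lambda>k. ((k, i), False)) [1..<Suc j]"

fun gam :: "(nat \<times> nat) option \<Rightarrow> (nat \<times> nat) word" where
  "gam None = []"
| "gam (Some (j, i)) = prefA j i"

lemma prefA_0[simp]: "prefA 0 i = []" by (simp add: prefA_def)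
lemma prefA_Suc: "prefA (Suc j) i = prefA j i @ [((Suc j, i), False)]" by (simp add: prefA_def)
lemma prefA_C: "prefA C i = A_word C i" by (simp add: prefA_def A_word_def)

lemma gam_vt: "j \<le> C \<Longrightarrow> gam (vt j i) = (if j = C then [] else prefA j i)"
  using Cpos by (auto simp: vt_def)

lemma gam_letter_pos:
  assumes "1 \<le> j" "j \<le> C"
  shows "free_eq (gam (sp ((j, i), False)) @ [((j, i), False)] @ inv_word (gam (ep ((j, i), False))))
                 (sig (fl ((j, i), False)))"
proof -
  have "j - 1 \<noteq> C" "j - 1 \<le> C" using assms by linarith+
  then have g1: "gam (vt (j - 1) i) = prefA (j - 1) i" using gam_vt[of "j - 1" i] by simp
  have p: "prefA (j - 1) i @ [((j, i), False)] = prefA j i" using assms prefA_Suc[of "j - 1" i] by simp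
  show ?thesis
  proof (cases "j = C")
    case True
    then show ?thesis using g1 p gam_vt[of j i] assms by (simp add: prefA_C)
  next
    case False
    have "free_eq ([] @ prefA j i @ inv_word (prefA j i) @ []) ([] @ [])" by (rule free_eq_inv_right)
    then have e: "free_eq (prefA j i @ inv_word (prefA j i)) []" by simp
    have q: "gam (sp ((j, i), False)) = prefA (j - 1) i" using g1 by simp
    have r: "gam (ep ((j, i), False)) = prefA j i" using gam_vt[of j i] assms False by simp
    have "gam (sp ((j, i), False)) @ [((j, i), False)] @ inv_word (gam (ep ((j, i), False)))
        = (prefA (j - 1) i @ [((j, i), False)]) @ inv_word (prefA j i)" by (simp only: q r append.assoc)
    also have "\<dots> = prefA j i @ inv_word (prefA j i)" by (simp only: p)
    finally show ?thesis using e False by simp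
  qed
qed

lemma gam_letter:
  assumes "1 \<le> fst (fst a)" "fst (fst a) \<le> C"
  shows "free_eq (gam (sp a) @ [a] @ inv_word (gam (ep a))) (sig (fl a))"
proof -
  obtain j i e where a: "a = ((j, i), e)" by (metis prod.collapse)
  have pos: "free_eq (gam (sp ((j, i), False)) @ [((j, i), False)] @ inv_word (gam (ep ((j, i), False))))
                 (sig (fl ((j, i), False)))" using gam_letter_pos assms a by simp
  show ?thesis
  proof (cases e)
    case False then show ?thesis using pos a by simp
  next
    case True
    have "a = inv_letter ((j, i), False)" using a True by (simp add: inv_letter_def)
    then show ?thesis using free_eq_inv[OF pos] by simp
  qed
qed

lemma gam_path:
  "conn P \<Longrightarrow> P \<noteq> [] \<Longrightarrow> (\<forall>a\<in>set P. 1 \<le> fst (fst a) \<and> fst (fst a) \<le> C) \<Longrightarrow>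
   free_eq (gam (sp (hd P)) @ P @ inv_word (gam (ep (last P)))) (sig (fP P))"
proof (induction P)
  case Nil then show ?case by simp
next
  case (Cons a P)
  show ?case
  proof (cases "P = []")
    case True then show ?thesis using Cons gam_letter by simp
  next
    case False
    have c: "ep a = sp (hd P)" "conn P" using Cons(2) False by (auto simp: conn_Cons)
    let ?gs = "gam (sp a)" and ?gm = "gam (ep a)" and ?ge = "gam (ep (last P))"
    have X: "free_eq (?gs @ [a] @ inv_word ?gm) (sig (fl a))" using Cons gam_letter by simp
    have Y: "free_eq (?gm @ P @ inv_word ?ge) (sig (fP P))" using Cons.IH c False Cons(4) by simp
    have "free_eq ((?gs @ [a]) @ inv_word ?gm @ ?gm @ (P @ inv_word ?ge)) ((?gs @ [a]) @ (P @ inv_word ?ge))"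
      by (rule free_eq_inv_left)
    then have e1: "free_eq (?gs @ (a # P) @ inv_word ?ge) ((?gs @ [a] @ inv_word ?gm) @ (?gm @ P @ inv_word ?ge))"
      by (simp add: free_eq_sym)
    have e2: "free_eq ((?gs @ [a] @ inv_word ?gm) @ (?gm @ P @ inv_word ?ge)) (sig (fl a) @ (?gm @ P @ inv_word ?ge))"
      using free_eq_cong[OF X, of "[]" "?gm @ P @ inv_word ?ge"] by simp
    have e3: "free_eq (sig (fl a) @ (?gm @ P @ inv_word ?ge)) (sig (fl a) @ sig (fP P))"
      using free_eq_cong[OF Y, of "sig (fl a)" "[]"] by simp
    have "free_eq (?gs @ (a # P) @ inv_word ?ge) (sig (fl a) @ sig (fP P))"
      using e1 e2 e3 by (meson free_eq_trans)
    then show ?thesis using False by simp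
  qed
qed

definition dl :: "nat \<Rightarrow> (nat \<times> nat) word \<Rightarrow> (nat \<times> nat) word" where
  "dl m w = filter (\<lambda>a. snd (fst a) \<in> {1..m}) w"

lemma dl_nil[simp]: "dl m [] = []" by (simp add: dl_def)

lemma dl_append[simp]: "dl m (u @ v) = dl m u @ dl m v" by (simp add: dl_def)

lemma dl_inv[simp]: "dl m (inv_word w) = inv_word (dl m w)"
  by (induction w) (auto simp: dl_def inv_letter_def)

lemma dl_cancel: "cancel_step x y \<Longrightarrow> free_eq (dl m x) (dl m y)"
proof (induction rule: cancel_step.induct)
  case (1 u a v)
  show ?case
  proof (cases "snd (fst a) \<in> {1..m}")
    case True
    then have "dl m (u @ [a, inv_letter a] @ v) = dl m u @ [a, inv_letter a] @ dl m v"
      by (simp add: dl_def inv_letter_def)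
    then show ?thesis using free_eq_cancel by simp
  next
    case False
    then have "dl m (u @ [a, inv_letter a] @ v) = dl m u @ dl m v"
      by (simp add: dl_def inv_letter_def)
    then show ?thesis by simp
  qed
qed

lemma dl_free_eq: "free_eq x y \<Longrightarrow> free_eq (dl m x) (dl m y)"
  unfolding free_eq_def[symmetric]
proof -
  assume "free_eq x y"
  then have "equivclp cancel_step x y" by (simp add: free_eq_def)
  then show "free_eq (dl m x) (dl m y)"
proof (induction rule: equivclp_induct)
  case base then show ?case by simp
next
  case (step y z)
  then show ?case using dl_cancel free_eq_sym free_eq_trans by metis
qed
qed

lemma dl_A: "dl m (A_word C i) = (if i \<in> {1..m} then A_word C i else [])"
  by (simp add: dl_def A_word_def filter_map comp_def)

lemma dl_sig: "dl m (sig xs) = sig (filter (\<lambda>p. fst p \<in> {1..m}) xs)"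
proof (induction xs)
  case Nil then show ?case by (simp add: dl_def)
next
  case (Cons a xs)
  obtain i e where a: "a = (i, e)" by (cases a)
  show ?case using Cons by (simp add: a dl_A)
qed

lemma sig_F_words: "\<forall>p\<in>set xs. 1 \<le> fst p \<and> fst p \<le> m \<Longrightarrow> sig xs \<in> F_words C m"
  unfolding F_words_def sig_def by blast

lemma dl_subst: "set r \<subseteq> {1..m} \<Longrightarrow> dl m (subst_C C r) = subst_C C r"
  by (induction r) (auto simp: subst_C_def dl_A)

lemma dl_rel: "\<forall>r \<in> S. set r \<subseteq> {1..m} \<Longrightarrow> r \<in> S_C C S \<Longrightarrow> dl m r = r"
  by (auto simp: S_C_def dl_subst)

lemma dl_conj:
  assumes Spos: "\<forall>r \<in> S. set r \<subseteq> {1..m}"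
  shows "x \<in> conj_products (range sig) (S_C C S) \<Longrightarrow> dl m x \<in> conj_products (F_words C m) (S_C C S)"
proof (induction rule: conj_products.induct)
  case nil then show ?case using conj_products.nil by (simp add: dl_def)
next
  case (pos u r w)
  have r: "dl m r = r" using pos(2) Spos dl_rel by blast
  obtain xs where u: "u = sig xs" using pos(1) by blast
  have "dl m u \<in> F_words C m" using u dl_sig sig_F_words by simp
  then show ?case using pos r by (simp add: conj_products.pos)
next
  case (neg u r w)
  have r: "dl m r = r" using neg(2) Spos dl_rel by blast
  obtain xs where u: "u = sig xs" using neg(1) by blast
  have "dl m u \<in> F_words C m" using u dl_sig sig_F_words by simp
  then show ?case using neg r by (simp add: conj_products.neg)
qed

lemma Nset_transfer:
  assumes Spos: "\<forall>r \<in> S. set r \<subseteq> {1..m}" and N: "Nset V" and V: "\<forall>a\<in>set V. snd (fst a) \<in> {1..m}"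
  shows "in_normal_closure (F_words C m) (S_C C S) V"
proof -
  obtain v where v: "v \<in> conj_products (range sig) (S_C C S)" "free_eq V v"
    using N unfolding Nset_def in_normal_closure_def by blast
  have "dl m V = V" using V by (simp add: dl_def)
  then have "free_eq V (dl m v)" using dl_free_eq[OF v(2), of m] by simp
  then show ?thesis unfolding in_normal_closure_def using dl_conj[OF Spos v(1)] by blast
qed

end


context lc
begin

lemma length_bound:
  assumes c: "conn V" and r: "reduced V" and ne: "V \<noteq> []"
    and let_: "\<forall>a\<in>set V. 1 \<le> fst (fst a) \<and> fst (fst a) \<le> C"
    and s: "sp (hd V) = None" and e: "ep (last V) = None"
  shows "C \<le> length V"
proof -
  have "\<exists>x\<in>set V. ep x = None" using e ne by auto
  then obtain ys x zs where V: "V = ys @ x # zs" and ex: "ep x = None" and ys: "\<forall>y\<in>set ys. ep y \<noteq> None"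
    using split_list_first_prop[of V "\<lambda>x. ep x = None"] by blast
  let ?Q = "ys @ [x]"
  have cQ: "conn ?Q" using c V by (simp add: conn_append conn_Cons)
  have rQ: "reduced ?Q" using r V by (simp add: reduced_append reduced_Cons)
  have lQ: "\<forall>a\<in>set ?Q. 1 \<le> fst (fst a)" using let_ V by auto
  have bQ: "\<forall>a\<in>set (butlast ?Q). ep a \<noteq> None" using ys by simp
  have hQ: "hd ?Q = hd V" using V by (cases ys) auto
  have len: "length ?Q \<le> length V" using V by simp
  obtain j i b where h: "hd V = ((j, i), b)" by (metis prod.collapse)
  have j: "1 \<le> j" "j \<le> C" using let_ h ne by (metis fst_conv hd_in_set)+
  show ?thesis
  proof (cases b)
    case False
    then have "j = 1" using s h j by (auto simp: vt_def split: if_splits)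
    then have "x = ((length ?Q, i), False)"
      using mono_pos[OF cQ rQ lQ bQ _ , of 1 i] hQ h False by simp
    then have "C \<le> length ?Q" using ex by (auto simp: vt_def split: if_splits)
    then show ?thesis using len by simp
  next
    case True
    then have jC: "j = C" using s h j by (auto simp: vt_def split: if_splits)
    then have "x = ((C + 1 - length ?Q, i), True) \<and> length ?Q \<le> C"
      using mono_neg[OF cQ rQ lQ bQ _ , of C i] hQ h True by simp
    then have "C \<le> length ?Q" using ex by (auto simp: vt_def split: if_splits)
    then show ?thesis using len by simp
  qed
qed

lemma cyc_red:
  assumes rW: "reduced W"
  shows "\<And>p q. W = p @ P @ q \<Longrightarrow> P \<noteq> [] \<Longrightarrow> conn P \<Longrightarrow> sp (hd P) = ep (last P) \<Longrightarrow> nrmY (fP P) \<Longrightarrow>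
    \<exists>p' P' q'. W = p' @ P' @ q' \<and> P' \<noteq> [] \<and> conn P' \<and> sp (hd P') = ep (last P') \<and> nrmY (fP P')
       \<and> hd P' \<noteq> inv_letter (last P')"
proof (induction P rule: length_induct)
  case (1 P)
  show ?case
  proof (cases "hd P = inv_letter (last P)")
    case False
    then show ?thesis using 1(2-6) by blast
  next
    case True
    obtain a P1 where aP: "P = a # P1" using 1(3) by (cases P) auto
    have "P1 \<noteq> []" using True aP by auto
    then obtain M b where P1: "P1 = M @ [b]" by (metis append_butlast_last_id)
    have ab: "a = inv_letter b" using True aP P1 by simp
    have rP: "reduced P" using rW 1(2) by (simp add: reduced_append)
    have Mne: "M \<noteq> []" using rP aP P1 ab by (auto simp: reduced_Cons)
    have cM: "conn M" and ca: "ep a = sp (hd M)" and cb: "ep (last M) = sp b"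
      using 1(4) aP P1 Mne by (auto simp: conn_Cons conn_append)
    have clM: "sp (hd M) = ep (last M)" using ca cb ab by simp
    have fp: "fP P = fl a @ fP M @ inv_word (fl a)" using aP P1 ab by simp
    have "nrmY (inv_word (fl a) @ (fl a @ fP M @ inv_word (fl a)) @ inv_word (inv_word (fl a)))"
      using nrmY_conj 1(6) fp by metis
    then have "nrmY ([] @ inv_word (fl a) @ fl a @ (fP M @ inv_word (fl a) @ fl a))" by simp
    then have "nrmY (fP M @ inv_word (fl a) @ fl a @ [])"
      using nrmY_cancel'[of "[]" "fl a" "fP M @ inv_word (fl a) @ fl a"] by simp
    then have nM: "nrmY (fP M)" using nrmY_cancel'[of "fP M" "fl a" "[]"] by simp
    have W: "W = (p @ [a]) @ M @ ([b] @ q)" using 1(2) aP P1 by simp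
    have "length M < length P" using aP P1 by simp
    then show ?thesis using 1(1) W Mne cM clM nM by blast
  qed
qed

lemma final:
  assumes Spos: "\<forall>r \<in> S. set r \<subseteq> {1..m}"
    and Wo: "W \<in> words_over (YC C m)" and Wne: "W \<noteq> []" and rW: "reduced W"
    and Wt: "in_normal_closure Conj (S_C C S) W"
  shows "\<exists>p P q V. W = p @ P @ q \<and> P \<noteq> [] \<and> reduced V \<and>
     in_normal_closure (F_words C m) (S_C C S) V \<and> (\<exists>j. P = rotate j V) \<and> C \<le> length V \<and> length V = length P"
proof -
  obtain p0 P0 q0 where P0: "W = p0 @ P0 @ q0" "P0 \<noteq> []" "conn P0" "sp (hd P0) = ep (last P0)" "nrmY (fP P0)"
    using main_exists[OF Wt Wne] by blast
  obtain p P q where P: "W = p @ P @ q" "P \<noteq> []" "conn P" "sp (hd P) = ep (last P)" "nrmY (fP P)"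
      "hd P \<noteq> inv_letter (last P)"
    using cyc_red[OF rW P0] by blast
  have letW: "\<forall>a\<in>set W. 1 \<le> fst (fst a) \<and> fst (fst a) \<le> C \<and> 1 \<le> snd (fst a) \<and> snd (fst a) \<le> m"
    using Wo by (auto simp: words_over_def YC_def)
  have letP: "\<forall>a\<in>set P. 1 \<le> fst (fst a) \<and> fst (fst a) \<le> C \<and> 1 \<le> snd (fst a) \<and> snd (fst a) \<le> m"
    using letW P(1) by auto
  have rP: "reduced P" using rW P(1) by (simp add: reduced_append)
  obtain x where x: "x \<in> set P" "ep x = None"
    using passes_o[OF P(3) rP _ P(2) P(4)] letP by blast
  obtain P1 P2 where sp: "P = P1 @ x # P2" using split_list[OF x(1)] by blast
  define V where "V = P2 @ (P1 @ [x])"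
  have PP: "P = (P1 @ [x]) @ P2" using sp by simp
  have rot: "P = rotate (length P2) V" unfolding V_def PP by (simp add: rotate_append)
  have hdP: "hd (P1 @ [x]) = hd P" using PP by (cases P1) auto
  have lastP: "P2 \<noteq> [] \<Longrightarrow> last P2 = last P" using PP by simp
  have RR: "reduced ((P1 @ [x]) @ P2)" using rP PP by metis
  then have r1: "reduced (P1 @ [x])" and r2: "reduced P2"
    using reduced_append[of "P1 @ [x]" P2] by blast+
  have "P2 \<noteq> [] \<longrightarrow> hd (P1 @ [x]) \<noteq> inv_letter (last P2)" using hdP lastP P(6) by simp
  then have rV: "reduced V"
    unfolding V_def using r1 r2 reduced_append[of P2 "P1 @ [x]"] by blast
  have CC: "conn ((P1 @ [x]) @ P2)" using P(3) PP by metis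
  then have c1: "conn (P1 @ [x])" and c2: "conn P2"
    using conn_append[of "P1 @ [x]" P2] by blast+
  have "P2 \<noteq> [] \<longrightarrow> ep (last P2) = sp (hd (P1 @ [x]))" using hdP lastP P(4) by simp
  then have cV: "conn V"
    unfolding V_def using c1 c2 conn_append[of P2 "P1 @ [x]"] by blast
  have sV: "sp (hd V) = None"
  proof (cases "P2 = []")
    case True
    then have "V = P" using PP V_def by simp
    then show ?thesis using P(4) PP True x(2) by simp
  next
    case False
    have "ep (last (P1 @ [x])) = sp (hd P2)" using CC conn_append[of "P1 @ [x]" P2] False by blast
    then show ?thesis using False x(2) V_def by simp
  qed
  have eV: "ep (last V) = None" using x(2) V_def by simp
  have Vne: "V \<noteq> []" using V_def by simp
  have letV: "\<forall>a\<in>set V. 1 \<le> fst (fst a) \<and> fst (fst a) \<le> C \<and> 1 \<le> snd (fst a) \<and> snd (fst a) \<le> m"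
    using letP PP V_def by auto
  have nV: "nrmY (fP V)" using P(5) PP V_def nrmY_rot by simp
  have "free_eq (gam (sp (hd V)) @ V @ inv_word (gam (ep (last V)))) (sig (fP V))"
    using gam_path[OF cV Vne] letV by blast
  then have "free_eq V (sig (fP V))" using sV eV by simp
  then have NV: "Nset V" using nV Nset_free free_eq_sym unfolding nrmY_def by blast
  have inc: "in_normal_closure (F_words C m) (S_C C S) V"
    using Nset_transfer[OF Spos NV] letV by auto
  have len: "C \<le> length V" using length_bound[OF cV rV Vne _ sV eV] letV by blast
  have "length V = length P" using PP V_def by simp
  then show ?thesis using P(1) P(2) rV inc rot len by blast
qed

end

theorem lemma3p3:
  fixes m C :: nat and S :: "nat list set" and W :: "(nat \<times> nat) word"
  assumes C_pos: "1 \<le> C"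
    and S_pos: "\<forall>r \<in> S. set r \<subseteq> {1..m}"
    and S_ne: "[] \<notin> S"
    and W_over: "W \<in> words_over (YC C m)"
    and W_ne: "W \<noteq> []"
    and W_cred: "cyclically_reduced W"
    and W_triv: "in_normal_closure (words_over (YC C m)) (S_C C S) W"
  shows "(\<exists>k p x s V. rotate k W = p @ x @ s \<and> x \<noteq> [] \<and>
            reduced V \<and> in_normal_closure (F_words C m) (S_C C S) V \<and>
            (\<exists>j. x = rotate j V))
         \<and> length W \<ge> C"
proof -
  interpret lc C S using C_pos by unfold_locales
  have rW: "reduced W" using W_cred by (simp add: cyclically_reduced_def)
  obtain p P q V where R: "W = p @ P @ q" "P \<noteq> []" "reduced V"
     "in_normal_closure (F_words C m) (S_C C S) V" "\<exists>j. P = rotate j V" "C \<le> length V" "length V = length P"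
    using final[OF S_pos W_over W_ne rW W_triv] by blast
  have "rotate 0 W = p @ P @ q" using R(1) by simp
  then have A: "\<exists>k p x s V. rotate k W = p @ x @ s \<and> x \<noteq> [] \<and>
            reduced V \<and> in_normal_closure (F_words C m) (S_C C S) V \<and> (\<exists>j. x = rotate j V)"
    using R by blast
  have "length W \<ge> C" using R(1) R(6) R(7) by simp
  then show ?thesis using A by blast
qed


end
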